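(* Let $X$ be a geodesic metric space and $f:X\to\mathbb R$. Then $f$ is glacially oscillating if and only if for each $\epsilon>0$ there is a bounded subset $K$ of $X$ such that for every connected component $C$ of $X\setminus K$ the diameter of $f(C)$ is at most $\epsilon$.
   Context: A glacial scale on a metric space $X$ is a sequence $\mathcal S=\{(K_i,n_i)\}_{i\ge1}$ of pairs, each $K_i$ a bounded subset of $X$ and $n_i$ a natural number, such that for every bounded $K\subset X$ and every $r>0$ there is $i$ with $K\subset K_i$ and $n_i>r$. An $\mathcal S$-chain is a finite sequence $x_1,\dots,x_n$ in $X$ such that for each $i\le n-1$ there is $m\ge1$ with $x_i,x_{i+1}\notin K_m$ and $d(x_i,x_{i+1})\le n_m$. A function $f:X\to\mathbb R$ is glacially oscillating if for every $\epsilon>0$ there is a glacial scale $\mathcal S$ such that $|f(x_1)-f(x_n)|<\epsilon$ for every $\mathcal S$-chain $x_1,\dots,x_n$. *)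

theory Defs
  imports "HOL-Analysis.Analysis"
begin

text \<open>The metric space X is the whole type 'a. Sequences are indexed from 0 instead of 1.\<close>

definition geodesic_space :: "'a::metric_space itself \<Rightarrow> bool" where
  "geodesic_space _ \<longleftrightarrow>
     (\<forall>x y::'a. \<exists>g::real \<Rightarrow> 'a. g 0 = x \<and> g (dist x y) = y \<and>
        (\<forall>s\<in>{0..dist x y}. \<forall>t\<in>{0..dist x y}. dist (g s) (g t) = \<bar>s - t\<bar>))"

definition glacial_scale :: "(nat \<Rightarrow> 'a::metric_space set \<times> nat) \<Rightarrow> bool" where
  "glacial_scale S \<longleftrightarrow>
     (\<forall>i. bounded (fst (S i))) \<and>
     (\<forall>K. bounded K \<longrightarrow> (\<forall>r::real. r > 0 \<longrightarrow>
        (\<exists>i. K \<subseteq> fst (S i) \<and> real (snd (S i)) > r)))"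

definition S_chain :: "(nat \<Rightarrow> 'a::metric_space set \<times> nat) \<Rightarrow> 'a list \<Rightarrow> bool" where
  "S_chain S xs \<longleftrightarrow> xs \<noteq> [] \<and>
     (\<forall>i. Suc i < length xs \<longrightarrow>
        (\<exists>m. xs ! i \<notin> fst (S m) \<and> xs ! Suc i \<notin> fst (S m) \<and>
             dist (xs ! i) (xs ! Suc i) \<le> real (snd (S m))))"

definition glacially_oscillating :: "('a::metric_space \<Rightarrow> real) \<Rightarrow> bool" where
  "glacially_oscillating f \<longleftrightarrow>
     (\<forall>\<epsilon>>0. \<exists>S. glacial_scale S \<and>
        (\<forall>xs. S_chain S xs \<longrightarrow> \<bar>f (hd xs) - f (last xs)\<bar> < \<epsilon>))"

end

theory Submission
  imports Defs
begin

lemma chain_in_connected: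
  fixes C :: "'a::metric_space set"
  assumes "connected C" "y \<in> C" "z \<in> C"
  shows "\<exists>xs. xs \<noteq> [] \<and> hd xs = y \<and> last xs = z \<and> set xs \<subseteq> C \<and>
           successively (\<lambda>u v. dist u v \<le> 1) xs"
proof (rule connected_equivalence_relation[OF assms,
      where R = "\<lambda>a b. \<exists>xs. xs \<noteq> [] \<and> hd xs = a \<and> last xs = b \<and> set xs \<subseteq> C \<and>
           successively (\<lambda>u v. dist u v \<le> 1) xs"])
  fix a b
  assume "\<exists>xs. xs \<noteq> [] \<and> hd xs = a \<and> last xs = b \<and> set xs \<subseteq> C \<and>
           successively (\<lambda>u v. dist u v \<le> 1) xs"
  then obtain xs where xs: "xs \<noteq> []" "hd xs = a" "last xs = b" "set xs \<subseteq> C"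
    "successively (\<lambda>u v. dist u v \<le> 1) xs" by blast
  show "\<exists>xs. xs \<noteq> [] \<and> hd xs = b \<and> last xs = a \<and> set xs \<subseteq> C \<and>
           successively (\<lambda>u v. dist u v \<le> 1) xs"
    apply (rule exI[of _ "rev xs"])
    using xs by (auto simp: hd_rev last_rev dist_commute)
next
  fix a b c
  assume "\<exists>xs. xs \<noteq> [] \<and> hd xs = a \<and> last xs = b \<and> set xs \<subseteq> C \<and>
           successively (\<lambda>u v. dist u v \<le> 1) xs"
    "\<exists>xs. xs \<noteq> [] \<and> hd xs = b \<and> last xs = c \<and> set xs \<subseteq> C \<and>
           successively (\<lambda>u v. dist u v \<le> 1) xs"
  then obtain xs ys where xs: "xs \<noteq> []" "hd xs = a" "last xs = b" "set xs \<subseteq> C"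
    "successively (\<lambda>u v. dist u v \<le> 1) xs"
    and ys: "ys \<noteq> []" "hd ys = b" "last ys = c" "set ys \<subseteq> C"
    "successively (\<lambda>u v. dist u v \<le> 1) ys" by blast
  show "\<exists>xs. xs \<noteq> [] \<and> hd xs = a \<and> last xs = c \<and> set xs \<subseteq> C \<and>
           successively (\<lambda>u v. dist u v \<le> 1) xs"
    apply (rule exI[of _ "xs @ ys"])
    using xs ys by (auto simp: successively_append_iff)
next
  fix a assume "a \<in> C"
  show "\<exists>T. openin (top_of_set C) T \<and> a \<in> T \<and>
      (\<forall>x\<in>T. \<exists>xs. xs \<noteq> [] \<and> hd xs = a \<and> last xs = x \<and> set xs \<subseteq> C \<and>
           successively (\<lambda>u v. dist u v \<le> 1) xs)"
  proof (rule exI[of _ "C \<inter> ball a 1"], intro conjI ballI)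
    show "openin (top_of_set C) (C \<inter> ball a 1)" by (simp add: openin_open_Int)
    show "a \<in> C \<inter> ball a 1" using \<open>a \<in> C\<close> by simp
    fix x assume "x \<in> C \<inter> ball a 1"
    then show "\<exists>xs. xs \<noteq> [] \<and> hd xs = a \<and> last xs = x \<and> set xs \<subseteq> C \<and>
           successively (\<lambda>u v. dist u v \<le> 1) xs"
      using \<open>a \<in> C\<close> by (intro exI[of _ "[a, x]"]) auto
  qed
qed

lemma geodesic_connect:
  fixes p u v :: "'a::metric_space"
  assumes geo: "geodesic_space TYPE('a)"
    and K: "K \<subseteq> cball p R" and m: "m \<ge> 0"
    and u: "dist p u > R + m" and v: "dist p v > R + m" and uv: "dist u v \<le> m"
  shows "v \<in> connected_component_set (- K) u"
proof -
  define d where "d = dist u v"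
  obtain g :: "real \<Rightarrow> 'a" where g0: "g 0 = u" and gd: "g d = v"
    and gi: "\<forall>s\<in>{0..d}. \<forall>t\<in>{0..d}. dist (g s) (g t) = \<bar>s - t\<bar>"
    using geo unfolding geodesic_space_def d_def by blast
  have d0: "d \<ge> 0" unfolding d_def by simp
  have cont: "continuous_on {0..d} g"
    unfolding continuous_on_iff
  proof (intro ballI allI impI)
    fix x e assume x: "x \<in> {0..d}" and e: "(0::real) < e"
    show "\<exists>d'>0. \<forall>x'\<in>{0..d}. dist x' x < d' \<longrightarrow> dist (g x') (g x) < e"
      using x e gi by (intro exI[of _ e]) (auto simp: dist_real_def)
  qed
  have conn: "connected (g ` {0..d})"
    by (rule connected_continuous_image[OF cont connected_Icc])
  have sub: "g ` {0..d} \<subseteq> - K"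
  proof
    fix w assume "w \<in> g ` {0..d}"
    then obtain t where t: "t \<in> {0..d}" and w: "w = g t" by blast
    have z: "0 \<in> {0..d}" "d \<in> {0..d}" using d0 by auto
    have "dist (g t) (g 0) = \<bar>t - 0\<bar>" using gi t z by blast
    then have 1: "dist w u = t" using t g0 w by simp
    have "dist (g t) (g d) = \<bar>t - d\<bar>" using gi t z by blast
    then have 2: "dist w v = d - t" using t gd w by simp
    have "dist p u \<le> dist p w + dist w u" by (rule dist_triangle)
    moreover have "dist p v \<le> dist p w + dist w v" by (rule dist_triangle)
    ultimately have "dist p w > R" using 1 2 u v uv d_def m d0 by linarith
    then show "w \<in> - K" using K by auto
  qed
  have "g ` {0..d} \<subseteq> connected_component_set (- K) u"
    by (rule connected_component_maximal) (use g0 d0 conn sub in auto)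
  moreover have "g d \<in> g ` {0..d}" using d0 by simp
  ultimately show ?thesis using gd by blast
qed

theorem proposition3p14:
  fixes f :: "'a::metric_space \<Rightarrow> real"
  assumes "geodesic_space TYPE('a)"
  shows "glacially_oscillating f \<longleftrightarrow>
    (\<forall>\<epsilon>>0. \<exists>K. bounded K \<and>
       (\<forall>x\<in>- K. \<forall>y\<in>connected_component_set (- K) x. \<forall>z\<in>connected_component_set (- K) x.
           \<bar>f y - f z\<bar> \<le> \<epsilon>))"
proof
  assume go: "glacially_oscillating f"
  show "\<forall>\<epsilon>>0. \<exists>K. bounded K \<and>
       (\<forall>x\<in>- K. \<forall>y\<in>connected_component_set (- K) x. \<forall>z\<in>connected_component_set (- K) x.
           \<bar>f y - f z\<bar> \<le> \<epsilon>)"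
  proof (intro allI impI)
    fix \<epsilon> :: real assume "\<epsilon> > 0"
    then obtain S where gs: "glacial_scale S"
      and ch: "\<And>xs. S_chain S xs \<Longrightarrow> \<bar>f (hd xs) - f (last xs)\<bar> < \<epsilon>"
      using go unfolding glacially_oscillating_def by blast
    obtain i where i: "real (snd (S i)) > 1/2"
      using gs unfolding glacial_scale_def by (metis bounded_empty empty_subsetI half_gt_zero zero_less_one)
    have "snd (S i) \<noteq> 0" using i by (intro notI) simp
    then have i1: "real (snd (S i)) \<ge> 1" by simp
    define K where "K = fst (S i)"
    have bK: "bounded K" using gs unfolding glacial_scale_def K_def by blast
    show "\<exists>K. bounded K \<and>
       (\<forall>x\<in>- K. \<forall>y\<in>connected_component_set (- K) x. \<forall>z\<in>connected_component_set (- K) x.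
           \<bar>f y - f z\<bar> \<le> \<epsilon>)"
    proof (intro exI conjI ballI)
      show "bounded K" by (rule bK)
      fix x y z assume x: "x \<in> - K" and y: "y \<in> connected_component_set (- K) x"
        and z: "z \<in> connected_component_set (- K) x"
      obtain xs where xs: "xs \<noteq> []" "hd xs = y" "last xs = z"
        "set xs \<subseteq> connected_component_set (- K) x"
        "successively (\<lambda>u v. dist u v \<le> 1) xs"
        using chain_in_connected[OF connected_connected_component y z] by blast
      have CK: "connected_component_set (- K) x \<subseteq> - K" by (rule connected_component_subset)
      have "S_chain S xs"
        unfolding S_chain_def
      proof (intro conjI allI impI)
        show "xs \<noteq> []" by (rule xs(1))
        fix j assume j: "Suc j < length xs"
        have "xs ! j \<in> set xs" "xs ! Suc j \<in> set xs" using j by auto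
        then have "xs ! j \<notin> K" "xs ! Suc j \<notin> K" using xs(4) CK by auto
        moreover have "dist (xs ! j) (xs ! Suc j) \<le> 1" using successively_nth[OF xs(5) j] by simp
        ultimately show "\<exists>m. xs ! j \<notin> fst (S m) \<and> xs ! Suc j \<notin> fst (S m) \<and>
             dist (xs ! j) (xs ! Suc j) \<le> real (snd (S m))"
          using i1 K_def by (intro exI[of _ i]) auto
      qed
      then have "\<bar>f (hd xs) - f (last xs)\<bar> < \<epsilon>" by (rule ch)
      then show "\<bar>f y - f z\<bar> \<le> \<epsilon>" using xs by simp
    qed
  qed
next
  assume H: "\<forall>\<epsilon>>0. \<exists>K. bounded K \<and>
       (\<forall>x\<in>- K. \<forall>y\<in>connected_component_set (- K) x. \<forall>z\<in>connected_component_set (- K) x.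
           \<bar>f y - f z\<bar> \<le> \<epsilon>)"
  show "glacially_oscillating f"
    unfolding glacially_oscillating_def
  proof (intro allI impI)
    fix \<epsilon> :: real assume e: "\<epsilon> > 0"
    then have e2: "\<epsilon>/2 > 0" by simp
    obtain K where bK: "bounded K" and HK: "\<forall>x\<in>- K. \<forall>y\<in>connected_component_set (- K) x.
         \<forall>z\<in>connected_component_set (- K) x. \<bar>f y - f z\<bar> \<le> \<epsilon>/2"
      using H[rule_format, OF e2] by (elim exE conjE) (rule that)
    define p :: 'a where "p = undefined"
    obtain R where R0: "R > 0" "K \<subseteq> ball p R" using bounded_subset_ballD[OF bK, of p] by (elim exE conjE) (rule that)
    have R: "R > 0" "K \<subseteq> cball p R" using R0 ball_subset_cball by blast+
    define S where "S = (\<lambda>i::nat. (cball p (R + real i), i))"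
    have gs: "glacial_scale S"
      unfolding glacial_scale_def
    proof (intro conjI allI impI)
      fix i show "bounded (fst (S i))" by (simp add: S_def)
    next
      fix K' :: "'a set" and r :: real assume bK': "bounded K'" and "r > 0"
      obtain B where B0: "B > 0" "K' \<subseteq> ball p B" using bounded_subset_ballD[OF bK', of p] by (elim exE conjE) (rule that)
      have B: "B > 0" "K' \<subseteq> cball p B" using B0 ball_subset_cball by blast+
      define i where "i = nat \<lceil>max B r\<rceil> + 1"
      have "real i > max B r" unfolding i_def by linarith
      then have "K' \<subseteq> cball p (R + real i)" "real i > r" using B R by (auto simp: subset_iff)
      then show "\<exists>i. K' \<subseteq> fst (S i) \<and> real (snd (S i)) > r"
        by (intro exI[of _ i]) (simp add: S_def)
    qed
    show "\<exists>S. glacial_scale S \<and> (\<forall>xs. S_chain S xs \<longrightarrow> \<bar>f (hd xs) - f (last xs)\<bar> < \<epsilon>)"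
    proof (rule exI[of _ S], intro conjI allI impI)
      show "glacial_scale S" by (rule gs)
      fix xs assume sc: "S_chain S xs"
      then have ne: "xs \<noteq> []" by (simp add: S_chain_def)
      show "\<bar>f (hd xs) - f (last xs)\<bar> < \<epsilon>"
      proof (cases "length xs = 1")
        case True
        then obtain a where "xs = [a]" by (metis One_nat_def length_0_conv length_Suc_conv)
        then show ?thesis using e by simp
      next
        case False
        with ne have l2: "Suc 0 < length xs" by (cases xs) auto
        have step: "\<And>j. Suc j < length xs \<Longrightarrow> xs ! j \<notin> K \<and>
            xs ! Suc j \<in> connected_component_set (- K) (xs ! j)"
        proof -
          fix j assume j: "Suc j < length xs"
          then obtain m where m: "xs ! j \<notin> fst (S m)" "xs ! Suc j \<notin> fst (S m)"
             "dist (xs ! j) (xs ! Suc j) \<le> real (snd (S m))"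
            using sc unfolding S_chain_def by blast
          have u: "dist p (xs ! j) > R + real m" and v: "dist p (xs ! Suc j) > R + real m"
            using m by (auto simp: S_def)
          have "\<not> dist p (xs ! j) \<le> R" using u by simp
          then have "xs ! j \<notin> cball p R" by simp
          then have "xs ! j \<notin> K" using R(2) by blast
          moreover have "xs ! Suc j \<in> connected_component_set (- K) (xs ! j)"
            by (rule geodesic_connect[OF assms R(2) _ u v]) (use m(3) in \<open>simp_all add: S_def\<close>)
          ultimately show "xs ! j \<notin> K \<and> xs ! Suc j \<in> connected_component_set (- K) (xs ! j)" by blast
        qed
        have x0: "xs ! 0 \<in> - K" using step[OF l2] by simp
        have all: "j < length xs \<Longrightarrow> xs ! j \<in> connected_component_set (- K) (xs ! 0)" for j
        proof (induction j)
          case 0 then show ?case using x0 by (simp add: connected_component_refl)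
        next
          case (Suc j)
          then have "xs ! j \<in> connected_component_set (- K) (xs ! 0)" by simp
          then have "connected_component_set (- K) (xs ! j) = connected_component_set (- K) (xs ! 0)"
            by (rule connected_component_eq)
          then show ?case using step[OF Suc.prems] by simp
        qed
        have "hd xs = xs ! 0" using ne by (simp add: hd_conv_nth)
        moreover have "last xs = xs ! (length xs - 1)" using ne by (simp add: last_conv_nth)
        moreover have "xs ! (length xs - 1) \<in> connected_component_set (- K) (xs ! 0)"
          using all ne by simp
        moreover have "xs ! 0 \<in> connected_component_set (- K) (xs ! 0)"
          using x0 by (simp add: connected_component_refl)
        ultimately have "\<bar>f (hd xs) - f (last xs)\<bar> \<le> \<epsilon>/2"
          using HK x0 by (metis (no_types, lifting))
        then show ?thesis using e by linarith
      qed
    qed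
  qed
qed

end
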